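(* A system $C=(1,c_2,c_3,c_4,2c_4-c_2)$ is canonical and its subsystem $(1,c_2,c_3,c_4)$ is noncanonical if and only if $C=(1,2,c_3,c_3+1,2c_3)$ and $c_3>3$.
   Context: A system is a tuple $C=(c_1,\dots,c_n)$ of integers with $1=c_1<c_2<\dots<c_n$; for $k\le n$, $(c_1,\dots,c_k)$ is a subsystem. For a positive integer $v$, $\mathrm{opt}_C(v)$ is the minimum of $\sum_i x_i$ over $x\in\mathbb{Z}_{\ge0}^n$ with $\sum_i c_ix_i=v$. The greedy representation of $v$ is produced by: for $i=n$ down to $1$, while $c_i\le$ remaining value, take a coin $c_i$. $\mathrm{grd}_C(v)$ is its number of coins. A positive integer $w$ is a counterexample if $\mathrm{opt}_C(w)<\mathrm{grd}_C(w)$; $C$ is canonical if it has none, noncanonical otherwise. *)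

theory Defs
  imports Main
begin

definition is_system :: "nat list \<Rightarrow> bool" where
  "is_system cs \<longleftrightarrow> cs \<noteq> [] \<and> hd cs = 1 \<and> sorted_wrt (<) cs"

definition is_rep :: "nat list \<Rightarrow> nat \<Rightarrow> nat list \<Rightarrow> bool" where
  "is_rep cs v xs \<longleftrightarrow> length xs = length cs \<and> (\<Sum>i<length cs. cs ! i * xs ! i) = v"

definition opt :: "nat list \<Rightarrow> nat \<Rightarrow> nat" where
  "opt cs v = (LEAST k. \<exists>xs. is_rep cs v xs \<and> sum_list xs = k)"

fun grd_desc :: "nat list \<Rightarrow> nat \<Rightarrow> nat" where
  "grd_desc [] v = 0"
| "grd_desc (c # cs) v = v div c + grd_desc cs (v mod c)"

definition grd :: "nat list \<Rightarrow> nat \<Rightarrow> nat" where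
  "grd cs v = grd_desc (rev cs) v"

definition counterexample :: "nat list \<Rightarrow> nat \<Rightarrow> bool" where
  "counterexample cs w \<longleftrightarrow> 0 < w \<and> opt cs w < grd cs w"

definition canonical :: "nat list \<Rightarrow> bool" where
  "canonical cs \<longleftrightarrow> (\<forall>w. \<not> counterexample cs w)"

end

theory Submission
  imports Defs
begin


definition G4 :: "nat \<Rightarrow> nat \<Rightarrow> nat \<Rightarrow> nat \<Rightarrow> nat" where
  "G4 a b c v = v div c + (v mod c) div b + ((v mod c) mod b) div a + ((v mod c) mod b) mod a"

definition G5 :: "nat \<Rightarrow> nat \<Rightarrow> nat \<Rightarrow> nat \<Rightarrow> nat \<Rightarrow> nat" where
  "G5 a b c d v = v div d + G4 a b c (v mod d)"

definition R4 :: "nat \<Rightarrow> nat \<Rightarrow> nat \<Rightarrow> nat \<Rightarrow> nat \<Rightarrow> bool" where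
  "R4 a b c v n \<longleftrightarrow> (\<exists>x1 x2 x3 x4. x1 + a*x2 + b*x3 + c*x4 = v \<and> x1+x2+x3+x4 \<le> n)"

definition R5 :: "nat \<Rightarrow> nat \<Rightarrow> nat \<Rightarrow> nat \<Rightarrow> nat \<Rightarrow> nat \<Rightarrow> bool" where
  "R5 a b c d v n \<longleftrightarrow> (\<exists>x1 x2 x3 x4 x5. x1 + a*x2 + b*x3 + c*x4 + d*x5 = v \<and> x1+x2+x3+x4+x5 \<le> n)"

lemma grd4: "grd [1,a,b,c] v = G4 a b c v"
  by (simp add: grd_def G4_def)

lemma grd5: "grd [1,a,b,c,d] v = G5 a b c d v"
  by (simp add: grd_def G5_def G4_def)

lemma is_rep4: "is_rep [1,a,b,c] v xs \<longleftrightarrow> (\<exists>x1 x2 x3 x4. xs = [x1,x2,x3,x4] \<and> x1 + a*x2 + b*x3 + c*x4 = v)"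
  by (auto simp: is_rep_def length_Suc_conv numeral_eq_Suc lessThan_Suc algebra_simps)

lemma is_rep5: "is_rep [1,a,b,c,d] v xs \<longleftrightarrow> (\<exists>x1 x2 x3 x4 x5. xs = [x1,x2,x3,x4,x5] \<and> x1 + a*x2 + b*x3 + c*x4 + d*x5 = v)"
  by (auto simp: is_rep_def length_Suc_conv numeral_eq_Suc lessThan_Suc algebra_simps)

lemma opt_less:
  assumes "\<exists>xs. is_rep cs v xs"
  shows "opt cs v < g \<longleftrightarrow> (\<exists>xs. is_rep cs v xs \<and> sum_list xs < g)"
proof
  assume "opt cs v < g"
  have "\<exists>k xs. is_rep cs v xs \<and> sum_list xs = k" using assms by blast
  then have "\<exists>xs. is_rep cs v xs \<and> sum_list xs = opt cs v"
    unfolding opt_def by (rule LeastI_ex)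
  then show "\<exists>xs. is_rep cs v xs \<and> sum_list xs < g" using \<open>opt cs v < g\<close> by auto
next
  assume "\<exists>xs. is_rep cs v xs \<and> sum_list xs < g"
  then obtain xs where "is_rep cs v xs" "sum_list xs < g" by blast
  then have "opt cs v \<le> sum_list xs" unfolding opt_def by (intro Least_le) blast
  then show "opt cs v < g" using \<open>sum_list xs < g\<close> by simp
qed

lemma canon4: "canonical [1,a,b,c] \<longleftrightarrow> (\<forall>w n. R4 a b c w n \<longrightarrow> G4 a b c w \<le> n)"
proof -
  have ex: "\<exists>xs. is_rep [1,a,b,c] v xs" for v unfolding is_rep4 by (rule exI[of _ "[v,0,0,0]"]) simp
  have "counterexample [1,a,b,c] w \<longleftrightarrow> 0 < w \<and> (\<exists>n. R4 a b c w n \<and> n < G4 a b c w)" for w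
  proof -
    have "(\<exists>xs. is_rep [1,a,b,c] w xs \<and> sum_list xs < G4 a b c w) \<longleftrightarrow> (\<exists>n. R4 a b c w n \<and> n < G4 a b c w)"
      unfolding is_rep4 R4_def
    proof
      assume "\<exists>xs. (\<exists>x1 x2 x3 x4. xs = [x1, x2, x3, x4] \<and> x1 + a * x2 + b * x3 + c * x4 = w) \<and> sum_list xs < G4 a b c w"
      then show "\<exists>n. (\<exists>x1 x2 x3 x4. x1 + a * x2 + b * x3 + c * x4 = w \<and> x1 + x2 + x3 + x4 \<le> n) \<and> n < G4 a b c w"
        by fastforce
    next
      assume "\<exists>n. (\<exists>x1 x2 x3 x4. x1 + a * x2 + b * x3 + c * x4 = w \<and> x1 + x2 + x3 + x4 \<le> n) \<and> n < G4 a b c w"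
      then obtain n x1 x2 x3 x4 where "x1 + a * x2 + b * x3 + c * x4 = w" "x1 + x2 + x3 + x4 \<le> n" "n < G4 a b c w" by blast
      then show "\<exists>xs. (\<exists>x1 x2 x3 x4. xs = [x1, x2, x3, x4] \<and> x1 + a * x2 + b * x3 + c * x4 = w) \<and> sum_list xs < G4 a b c w"
        by (intro exI[of _ "[x1,x2,x3,x4]"]) auto
    qed
    then show ?thesis unfolding counterexample_def opt_less[OF ex] grd4 by blast
  qed
  moreover have "G4 a b c 0 = 0" by (simp add: G4_def)
  ultimately show ?thesis unfolding canonical_def by (auto simp: not_less) (metis le0)
qed

lemma canon5: "canonical [1,a,b,c,d] \<longleftrightarrow> (\<forall>w n. R5 a b c d w n \<longrightarrow> G5 a b c d w \<le> n)"
proof -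
  have ex: "\<exists>xs. is_rep [1,a,b,c,d] v xs" for v unfolding is_rep5 by (rule exI[of _ "[v,0,0,0,0]"]) simp
  have "counterexample [1,a,b,c,d] w \<longleftrightarrow> 0 < w \<and> (\<exists>n. R5 a b c d w n \<and> n < G5 a b c d w)" for w
  proof -
    have "(\<exists>xs. is_rep [1,a,b,c,d] w xs \<and> sum_list xs < G5 a b c d w) \<longleftrightarrow> (\<exists>n. R5 a b c d w n \<and> n < G5 a b c d w)"
      unfolding is_rep5 R5_def
    proof
      assume "\<exists>xs. (\<exists>x1 x2 x3 x4 x5. xs = [x1, x2, x3, x4, x5] \<and> x1 + a * x2 + b * x3 + c * x4 + d * x5 = w) \<and> sum_list xs < G5 a b c d w"
      then show "\<exists>n. (\<exists>x1 x2 x3 x4 x5. x1 + a * x2 + b * x3 + c * x4 + d * x5 = w \<and> x1 + x2 + x3 + x4 + x5 \<le> n) \<and> n < G5 a b c d w"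
        by fastforce
    next
      assume "\<exists>n. (\<exists>x1 x2 x3 x4 x5. x1 + a * x2 + b * x3 + c * x4 + d * x5 = w \<and> x1 + x2 + x3 + x4 + x5 \<le> n) \<and> n < G5 a b c d w"
      then obtain n x1 x2 x3 x4 x5 where "x1 + a * x2 + b * x3 + c * x4 + d * x5 = w" "x1 + x2 + x3 + x4 + x5 \<le> n" "n < G5 a b c d w" by blast
      then show "\<exists>xs. (\<exists>x1 x2 x3 x4 x5. xs = [x1, x2, x3, x4, x5] \<and> x1 + a * x2 + b * x3 + c * x4 + d * x5 = w) \<and> sum_list xs < G5 a b c d w"
        by (intro exI[of _ "[x1,x2,x3,x4,x5]"]) auto
    qed
    then show ?thesis unfolding counterexample_def opt_less[OF ex] grd5 by blast
  qed
  moreover have "G5 a b c d 0 = 0" by (simp add: G5_def G4_def)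
  ultimately show ?thesis unfolding canonical_def by (auto simp: not_less) (metis le0)
qed



lemma R4_greedy: "R4 a b c v (G4 a b c v)"
proof -
  let ?u = "(v mod c) mod b"
  have e1: "c * (v div c) + v mod c = v" by simp
  have e2: "b * ((v mod c) div b) + ?u = v mod c" by simp
  have e3: "a * (?u div a) + ?u mod a = ?u" by simp
  show ?thesis unfolding R4_def G4_def
    by (rule exI[of _ "?u mod a"], rule exI[of _ "?u div a"], rule exI[of _ "(v mod c) div b"],
        rule exI[of _ "v div c"]) (use e1 e2 e3 in linarith)
qed

lemma R4_mono: "R4 a b c v n \<Longrightarrow> n \<le> m \<Longrightarrow> R4 a b c v m"
  unfolding R4_def by fastforce

lemma R4_add: "R4 a b c v n \<Longrightarrow> k \<in> {1,a,b,c} \<Longrightarrow> R4 a b c (v+k) (Suc n)"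
proof -
  assume "R4 a b c v n" "k \<in> {1,a,b,c}"
  then obtain x1 x2 x3 x4 where h: "x1 + a*x2 + b*x3 + c*x4 = v" "x1+x2+x3+x4 \<le> n"
    unfolding R4_def by blast
  from \<open>k \<in> {1,a,b,c}\<close> show ?thesis
  proof (elim insertE emptyE)
    assume "k = 1" then show ?thesis unfolding R4_def
      by (rule_tac exI[of _ "Suc x1"], rule_tac exI[of _ x2], rule_tac exI[of _ x3], rule_tac exI[of _ x4]) (use h in auto)
  next
    assume "k = a" then show ?thesis unfolding R4_def
      by (rule_tac exI[of _ x1], rule_tac exI[of _ "Suc x2"], rule_tac exI[of _ x3], rule_tac exI[of _ x4]) (use h in auto)
  next
    assume "k = b" then show ?thesis unfolding R4_def
      by (rule_tac exI[of _ x1], rule_tac exI[of _ x2], rule_tac exI[of _ "Suc x3"], rule_tac exI[of _ x4]) (use h in auto)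
  next
    assume "k = c" then show ?thesis unfolding R4_def
      by (rule_tac exI[of _ x1], rule_tac exI[of _ x2], rule_tac exI[of _ x3], rule_tac exI[of _ "Suc x4"]) (use h in auto)
  qed
qed

lemma R4_R5: "R4 a b c v n \<Longrightarrow> R5 a b c d v n"
  unfolding R4_def R5_def by (metis add.right_neutral mult_0_right)

lemma G4_ge: "0 < c \<Longrightarrow> c \<le> v \<Longrightarrow> G4 a b c v = Suc (G4 a b c (v - c))"
proof -
  assume "0 < c" "c \<le> v"
  have "v div c = Suc ((v - c) div c)" using \<open>0<c\<close> \<open>c \<le> v\<close> by (metis Suc_diff_le diff_Suc_1 div_add_self2 le_add_diff_inverse2 less_irrefl_nat add_diff_cancel_right' div_if not_less)
  moreover have "v mod c = (v - c) mod c" using \<open>0<c\<close> \<open>c \<le> v\<close> by (metis le_add_diff_inverse2 mod_add_self2)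
  ultimately show ?thesis unfolding G4_def by simp
qed

lemma G5_lt: "v < d \<Longrightarrow> G5 a b c d v = G4 a b c v"
  unfolding G5_def by simp

lemma coin_used:
  assumes "R4 a b c w n" "0 < w"
  shows "\<exists>k\<in>{1,a,b,c}. k \<le> w \<and> R4 a b c (w-k) (n-1) \<and> 1 \<le> n"
proof -
  obtain x1 x2 x3 x4 where h: "x1 + a*x2 + b*x3 + c*x4 = w" "x1+x2+x3+x4 \<le> n"
    using assms(1) unfolding R4_def by blast
  consider "x1 > 0" | "x2 > 0" | "x3 > 0" | "x4 > 0" using h assms(2) by fastforce
  then show ?thesis
  proof cases
    case 1
    have "R4 a b c (w-1) (n-1)" unfolding R4_def
      by (rule exI[of _ "x1 - 1"], rule exI[of _ x2], rule exI[of _ x3], rule exI[of _ x4]) (use h 1 in auto)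
    then show ?thesis using h 1 by auto
  next
    case 2
    have "R4 a b c (w-a) (n-1)" unfolding R4_def
      by (rule exI[of _ x1], rule exI[of _ "x2 - 1"], rule exI[of _ x3], rule exI[of _ x4]) (use h 2 in \<open>cases x2; simp; linarith\<close>)
    moreover have "a \<le> w" using h 2 by (cases x2) auto
    ultimately show ?thesis using h 2 by auto
  next
    case 3
    have "R4 a b c (w-b) (n-1)" unfolding R4_def
      by (rule exI[of _ x1], rule exI[of _ x2], rule exI[of _ "x3 - 1"], rule exI[of _ x4]) (use h 3 in \<open>cases x3; simp; linarith\<close>)
    moreover have "b \<le> w" using h 3 by (cases x3) auto
    ultimately show ?thesis using h 3 by auto
  next
    case 4
    have "R4 a b c (w-c) (n-1)" unfolding R4_def
      by (rule exI[of _ x1], rule exI[of _ x2], rule exI[of _ x3], rule exI[of _ "x4 - 1"]) (use h 4 in \<open>cases x4; simp; linarith\<close>)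
    moreover have "c \<le> w" using h 4 by (cases x4) auto
    ultimately show ?thesis using h 4 by auto
  qed
qed



lemma KZ:
  assumes "0 < a" "a < b" "b < c" "R4 a b c w n" "n < G4 a b c w" "0 < w"
    and min: "\<forall>v m. 0 < v \<longrightarrow> v < w \<longrightarrow> R4 a b c v m \<longrightarrow> G4 a b c v \<le> m"
  shows "w < b + c"
proof (rule ccontr)
  assume "\<not> w < b + c"
  then have w: "b + c \<le> w" by simp
  obtain k where k: "k\<in>{1,a,b,c}" "k \<le> w" "R4 a b c (w-k) (n-1)" "1 \<le> n"
    using coin_used[OF assms(4,6)] by blast
  have Gw: "G4 a b c w = Suc (G4 a b c (w-c))" using G4_ge[of c w a b] w assms by simp
  have "\<exists>m. R4 a b c (w - c) m \<and> m < G4 a b c (w-c)"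
  proof (cases "k = c")
    case True
    then show ?thesis using k Gw assms(5) by (intro exI[of _ "n-1"]) auto
  next
    case False
    then have kb: "k \<le> b" "0 < k" using k assms(1-3) by auto
    have "0 < w - k" "w - k < w" using kb w assms by auto
    then have m1: "G4 a b c (w-k) \<le> n - 1" using min k(3) by blast
    have c1: "c \<le> w - k" using kb w by simp
    have g: "G4 a b c (w-k) = Suc (G4 a b c (w-k-c))" using G4_ge[OF _ c1] assms by simp
    have "R4 a b c (w-k-c+k) (Suc (G4 a b c (w-k-c)))" by (rule R4_add[OF R4_greedy k(1)])
    moreover have "w-k-c+k = w - c" using kb c1 k(2) by linarith
    ultimately have "R4 a b c (w-c) (G4 a b c (w-k))" using g by simp
    then show ?thesis using m1 Gw assms(5) k(4) by (intro exI[of _ "G4 a b c (w-k)"]) auto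
  qed
  then obtain m where "R4 a b c (w - c) m" "m < G4 a b c (w-c)" by blast
  moreover have "0 < w - c" "w - c < w" using w assms by auto
  ultimately show False using min by (meson not_le)
qed



lemma div1: "(c::nat) \<le> v \<Longrightarrow> v < 2*c \<Longrightarrow> v div c = 1 \<and> v mod c = v - c"
proof -
  assume h: "c \<le> v" "v < 2*c"
  then have "0 < c" by simp
  have "v - c < c" using h by simp
  then show ?thesis using h \<open>0<c\<close> by (simp add: le_div_geq le_mod_geq)
qed

lemma G4_small: "u < a \<Longrightarrow> a < b \<Longrightarrow> b < c \<Longrightarrow> G4 a b c u = u"
  unfolding G4_def by simp

lemma L_mod:
  fixes a x1 x2 x3 x4 :: nat
  assumes "2 \<le> a" "x1 + a*x2 + (2*a-1)*x3 + (3*a-2)*x4 = 5*a-4"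
  shows "a \<le> x1+x2+x3+x4"
proof -
  define S where "S = int (x1+x2+x3+x4)"
  define T where "T = int (x2 + 2*x3 + 3*x4)"
  define A where "A = int a"
  have A2: "A \<ge> 2" using assms(1) unfolding A_def by simp
  have "int (x1 + a*x2 + (2*a-1)*x3 + (3*a-2)*x4) = int (5*a-4)" using assms(2) by simp
  then have eq: "int x1 + A*int x2 + (2*A-1)*int x3 + (3*A-2)*int x4 = 5*A-4"
    using assms(1) unfolding A_def by (simp add: of_nat_diff)
  have e1: "S + (A-1)*T = 5*A-4" using eq unfolding S_def T_def by (simp add: algebra_simps)
  have TS: "T \<le> 3*S" unfolding S_def T_def by simp
  have S0: "S \<ge> 0" unfolding S_def by simp
  have "S \<ge> 2"
  proof (rule ccontr)
    assume "\<not> S \<ge> 2"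
    then have "S \<le> 1" by simp
    have "(A-1)*T \<le> (A-1)*(3*S)" using TS A2 by (intro mult_left_mono) auto
    also have "\<dots> \<le> (A-1)*3" using \<open>S \<le> 1\<close> A2 by (intro mult_left_mono) auto
    finally have "(A-1)*T \<le> 3*A - 3" by (simp add: algebra_simps)
    then show False using e1 \<open>S \<le> 1\<close> A2 by linarith
  qed
  have e2: "S - 1 = (A-1)*(5-T)" using e1 by (simp add: algebra_simps)
  have "5 - T \<ge> 1"
  proof (rule ccontr)
    assume "\<not> 5 - T \<ge> 1"
    then have "5 - T \<le> 0" by simp
    then have "(A-1)*(5-T) \<le> 0" using A2 by (intro mult_nonneg_nonpos) auto
    then show False using e2 \<open>S \<ge> 2\<close> by linarith
  qed
  then have "(A-1)*1 \<le> (A-1)*(5-T)" using A2 by (intro mult_left_mono) auto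
  then have "A - 1 \<le> S - 1" using e2 by simp
  then have "S \<ge> A" by linarith
  then show ?thesis unfolding S_def A_def by simp
qed

lemma fwd:
  assumes a1: "1 < a" and ab: "a < b" and bc: "b < c"
    and canC: "\<forall>v n. R5 a b c (2*c-a) v n \<longrightarrow> G5 a b c (2*c-a) v \<le> n"
    and nD: "\<exists>w n. R4 a b c w n \<and> n < G4 a b c w"
  shows "a = 2 \<and> c = b + 1 \<and> b > 3"
proof -
  define d where "d = 2*c - a"
  define P where "P w \<longleftrightarrow> (\<exists>n. R4 a b c w n \<and> n < G4 a b c w)" for w
  define w where "w = (LEAST w. P w)"
  have Pw: "P w" unfolding w_def using nD P_def by (metis LeastI_ex)
  have minP: "\<not> P v" if "v < w" for v using that not_less_Least unfolding w_def by blast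
  obtain n where Rw: "R4 a b c w n" and nw: "n < G4 a b c w" using Pw P_def by blast
  have w0: "0 < w" using nw by (cases w) (auto simp: G4_def)
  have min: "\<forall>v m. 0 < v \<longrightarrow> v < w \<longrightarrow> R4 a b c v m \<longrightarrow> G4 a b c v \<le> m"
    using minP unfolding P_def by (meson not_le)
  have canC': "G5 a b c d v \<le> m" if "R5 a b c d v m" for v m using canC that unfolding d_def by blast
  have wd: "d \<le> w"
  proof (rule ccontr)
    assume "\<not> d \<le> w"
    then have "G5 a b c d w = G4 a b c w" by (simp add: G5_lt)
    moreover have "R5 a b c d w n" using R4_R5[OF Rw] .
    ultimately show False using canC' nw by fastforce
  qed
  have wbc: "w < b + c" using KZ[OF _ ab bc Rw nw w0 min] a1 by simp
  have cab: "c < a + b" using wd wbc unfolding d_def by linarith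
  have R5bc: "R5 a b c d (b+c) 2" unfolding R5_def
    by (rule exI[of _ 0], rule exI[of _ 0], rule exI[of _ 1], rule exI[of _ 1], rule exI[of _ 0]) simp
  have dv: "(b+c) div d = 1 \<and> (b+c) mod d = a + b - c" using div1[of d "b+c"] cab bc ab unfolding d_def by simp
  have "a+b-c < a" using bc a1 by simp
  then have "G5 a b c d (b+c) = 1 + (a+b-c)" unfolding G5_def using dv G4_small[of "a+b-c" a b c] ab bc by simp
  then have "1 + (a+b-c) \<le> 2" using canC'[OF R5bc] by simp
  then have c_eq: "c = a + b - 1" using cab by linarith
  have d_eq: "d = a + 2*b - 2" unfolding d_def using c_eq ab a1 by simp
  have w_eq: "w = d" using wd wbc c_eq d_eq by linarith
  have b_ne: "b \<noteq> 2*a - 1"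
  proof
    assume b_eq: "b = 2*a - 1"
    then have c3: "c = 3*a - 2" using c_eq a1 by simp
    have w5: "w = 5*a - 4" using w_eq d_eq b_eq a1 by simp
    have q1: "w div c = 1 \<and> w mod c = 2*a - 2" using div1[of c w] w5 c3 a1 by simp
    have q2: "(2*a-2) div b = 0 \<and> (2*a-2) mod b = 2*a-2" using b_eq a1 by simp
    have q3: "(2*a-2) div a = 1 \<and> (2*a-2) mod a = a - 2" using div1[of a "2*a-2"] a1 by simp
    have "G4 a b c w = a" unfolding G4_def using q1 q2 q3 a1 by simp
    obtain x1 x2 x3 x4 where x: "x1 + a*x2 + b*x3 + c*x4 = w" "x1+x2+x3+x4 \<le> n"
      using Rw unfolding R4_def by blast
    have "a \<le> x1+x2+x3+x4" using L_mod[of a x1 x2 x3 x4] x(1) b_eq c3 w5 a1 by simp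
    then show False using x(2) nw \<open>G4 a b c w = a\<close> by simp
  qed
  have a2: "a = 2"
  proof (rule ccontr)
    assume "a \<noteq> 2"
    then have a3: "a \<ge> 3" using a1 by simp
    define t where "t = b - a + 1"
    have R52: "R5 a b c d (2*b) 2" unfolding R5_def
      by (rule exI[of _ 0], rule exI[of _ 0], rule exI[of _ 2], rule exI[of _ 0], rule exI[of _ 0]) simp
    have "2*b < d" using d_eq a3 by simp
    then have g5: "G5 a b c d (2*b) = G4 a b c (2*b)" by (rule G5_lt)
    have q1: "(2*b) div c = 1 \<and> (2*b) mod c = t" using div1[of c "2*b"] c_eq ab a1 unfolding t_def by simp
    have tb: "t < b" "2 \<le> t" "t \<noteq> a" using ab a3 b_ne unfolding t_def by auto
    have q2: "t div b = 0 \<and> t mod b = t" using tb by simp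
    have q3: "2 \<le> t div a + t mod a"
    proof (rule ccontr)
      assume "\<not> 2 \<le> t div a + t mod a"
      then have lt: "t div a + t mod a \<le> 1" by simp
      have e: "t = a * (t div a) + t mod a" by simp
      show False
      proof (cases "t div a")
        case 0
        then show False using e lt tb by simp
      next
        case (Suc k)
        then have "k = 0" "t mod a = 0" using lt by simp_all
        then have "t = a" using e Suc by simp
        then show False using tb by simp
      qed
    qed
    have "G4 a b c (2*b) \<ge> 3" unfolding G4_def using q1 q2 q3 by simp
    then show False using canC'[OF R52] g5 by simp
  qed
  show ?thesis using a2 c_eq b_ne ab by auto
qed



definition f :: "nat \<Rightarrow> nat" where "f u = u div 2 + u mod 2"
lemma F1: "f (Suc u) \<le> f u + 1" unfolding f_def by presburger
lemma F2: "f u \<le> f (Suc u)" unfolding f_def by presburger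
lemma F3: "f (u+2) = f u + 1" unfolding f_def by simp
lemma F0: "f 0 = 0" "f 1 = 1" "f (Suc 0) = 1" unfolding f_def by simp_all
lemma Fp: "0 < u \<Longrightarrow> 1 \<le> f u" unfolding f_def by presburger

definition H :: "nat \<Rightarrow> nat \<Rightarrow> nat" where
  "H b m = (if m < b then f m else if m = b then 1 else 1 + f (m-b-1))"

lemma G4_H: assumes "2 \<le> b" "m < 2*b" shows "G4 2 b (b+1) m = H b m"
proof -
  consider "m < b" | "m = b" | "b < m" by linarith
  then show ?thesis
  proof cases
    case 1 then show ?thesis unfolding G4_def H_def f_def by simp
  next
    case 2 then show ?thesis unfolding G4_def H_def using assms by simp
  next
    case 3
    have q: "m div (b+1) = 1 \<and> m mod (b+1) = m - (b+1)" using div1[of "b+1" m] 3 assms by simp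
    have "m - (b+1) < b" using assms by simp
    then show ?thesis unfolding G4_def H_def f_def using q 3 by simp
  qed
qed

lemma H0: "0 < b \<Longrightarrow> H b 0 = 0" unfolding H_def by (simp add: F0)
lemma Hpos: "0 < m \<Longrightarrow> 1 \<le> H b m" unfolding H_def using Fp by auto

lemma Hstep1:
  assumes "4 \<le> b" "m < 2*b"
  shows "if m + 1 < 2*b then H b (m+1) \<le> H b m + 1 else 1 + H b (m+1-2*b) \<le> H b m + 1"
proof -
  consider "m + 1 < b" | "m + 1 = b" | "m = b" | "b < m \<and> m + 1 < 2*b" | "m + 1 = 2*b" using assms by linarith
  then show ?thesis
  proof cases
    case 1 then show ?thesis unfolding H_def using F1[of m] by simp
  next
    case 2 then show ?thesis unfolding H_def by simp
  next
    case 3 then show ?thesis unfolding H_def using assms by (simp add: F0)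
  next
    case 4
    then have "m + 1 - b - 1 = Suc (m - b - 1)" by linarith
    then show ?thesis unfolding H_def using 4 F1[of "m-b-1"] by simp
  next
    case 5 then show ?thesis using H0[of b] assms by simp
  qed
qed

lemma Hstep2:
  assumes "4 \<le> b" "m < 2*b"
  shows "if m + 2 < 2*b then H b (m+2) \<le> H b m + 1 else 1 + H b (m+2-2*b) \<le> H b m + 1"
proof -
  consider "m + 2 < b" | "m + 2 = b" | "m + 1 = b" | "m = b" | "b < m \<and> m + 2 < 2*b" | "2*b \<le> m + 2" using assms by linarith
  then show ?thesis
  proof cases
    case 1 then show ?thesis unfolding H_def using F3[of m] by simp
  next
    case 2 then show ?thesis unfolding H_def by simp
  next
    case 3 then show ?thesis unfolding H_def using assms by (simp add: F0)
  next
    case 4 then show ?thesis unfolding H_def using assms by (simp add: F0)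
  next
    case 5
    then have "m + 2 - b - 1 = (m - b - 1) + 2" by linarith
    then show ?thesis unfolding H_def using 5 F3[of "m-b-1"] by simp
  next
    case 6
    then have "m + 2 - 2*b \<le> 1" using assms by simp
    then have "H b (m + 2 - 2*b) \<le> 1" unfolding H_def using assms by (auto simp: F0 le_Suc_eq)
    moreover have "1 \<le> H b m" using Hpos[of m b] 6 assms by simp
    ultimately show ?thesis using 6 by simp
  qed
qed

lemma Hstepb:
  assumes "4 \<le> b" "m < 2*b"
  shows "if m + b < 2*b then H b (m+b) \<le> H b m + 1 else 1 + H b (m+b-2*b) \<le> H b m + 1"
proof -
  consider "m = 0" | "0 < m \<and> m < b" | "m = b" | "b < m" using assms by linarith
  then show ?thesis
  proof cases
    case 1 then show ?thesis unfolding H_def using assms by simp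
  next
    case 2
    then have "m + b - b - 1 = m - 1" "Suc (m - 1) = m" by simp_all
    then show ?thesis unfolding H_def using 2 F2[of "m-1"] by simp
  next
    case 3 then show ?thesis using H0[of b] assms by simp
  next
    case 4
    have e: "m + b - 2*b = Suc (m - b - 1)" "m + b - 2*b < b" using 4 assms by linarith+
    then show ?thesis unfolding H_def using 4 F1[of "m-b-1"] by simp
  qed
qed

lemma Hstepb1:
  assumes "4 \<le> b" "m < 2*b"
  shows "if m + (b+1) < 2*b then H b (m+(b+1)) \<le> H b m + 1 else 1 + H b (m+(b+1)-2*b) \<le> H b m + 1"
proof -
  consider "m + 1 < b" | "m + 1 = b" | "m = b" | "b < m \<and> m + 1 < 2*b" | "m + 1 = 2*b" using assms by linarith
  then show ?thesis
  proof cases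
    case 1 then show ?thesis unfolding H_def by simp
  next
    case 2 then show ?thesis using H0[of b] assms by simp
  next
    case 3 then show ?thesis unfolding H_def using assms by (simp add: F0)
  next
    case 4
    have e: "m + (b+1) - 2*b = (m - b - 1) + 2" "m + (b+1) - 2*b < b" using 4 assms by linarith+
    then show ?thesis unfolding H_def using 4 F3[of "m-b-1"] by simp
  next
    case 5
    then have "m + (b+1) - 2*b = b" by simp
    moreover have "1 \<le> H b m" using Hpos[of m b] 5 assms by simp
    moreover have "H b b = 1" unfolding H_def by simp
    ultimately show ?thesis using 5 by simp
  qed
qed



lemma G5_form: assumes "2 \<le> b" "r < 2*b"
  shows "G5 2 b (b+1) (2*b) (r + j*(2*b)) = j + H b r"
proof -
  have "(r + j*(2*b)) div (2*b) = j" "(r + j*(2*b)) mod (2*b) = r" using assms by simp_all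
  then show ?thesis unfolding G5_def using G4_H[OF assms] by simp
qed

lemma G5step:
  assumes b: "4 \<le> b" and k: "k \<in> {1,2,b,b+1,2*b}"
  shows "G5 2 b (b+1) (2*b) (v+k) \<le> G5 2 b (b+1) (2*b) v + 1"
proof -
  define q where "q = v div (2*b)"
  define m where "m = v mod (2*b)"
  have v: "v = m + q*(2*b)" unfolding q_def m_def by (metis mod_div_mult_eq)
  have m: "m < 2*b" unfolding m_def using b by simp
  have b2: "2 \<le> b" using b by simp
  have Gv: "G5 2 b (b+1) (2*b) v = q + H b m" using G5_form[OF b2 m] v by simp
  show ?thesis
  proof (cases "k = 2*b")
    case True
    have e: "v + k = m + (Suc q)*(2*b)" using v True by simp
    have "G5 2 b (b+1) (2*b) (v+k) = Suc q + H b m" unfolding e by (rule G5_form[OF b2 m])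
    then show ?thesis using Gv by simp
  next
    case False
    then have k4: "k \<in> {1,2,b,b+1}" using k by simp
    have hs: "if m + k < 2*b then H b (m+k) \<le> H b m + 1 else 1 + H b (m+k-2*b) \<le> H b m + 1"
      using k4 Hstep1[OF b m] Hstep2[OF b m] Hstepb[OF b m] Hstepb1[OF b m] by auto
    have kl: "k < 2*b" using k4 b by auto
    show ?thesis
    proof (cases "m + k < 2*b")
      case True
      have e: "v + k = (m + k) + q*(2*b)" using v by simp
      have "G5 2 b (b+1) (2*b) (v+k) = q + H b (m+k)" unfolding e by (rule G5_form[OF b2 True])
      then show ?thesis using Gv hs True by simp
    next
      case False
      have lt: "m + k - 2*b < 2*b" using m kl by linarith
      have e: "v + k = (m + k - 2*b) + (Suc q)*(2*b)" using v False by simp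
      have "G5 2 b (b+1) (2*b) (v+k) = Suc q + H b (m+k-2*b)" unfolding e by (rule G5_form[OF b2 lt])
      then show ?thesis using Gv hs False by simp
    qed
  qed
qed

lemma G5_mul:
  assumes "4 \<le> b" "k \<in> {1,2,b,b+1,2*b}"
  shows "G5 2 b (b+1) (2*b) (v + k*j) \<le> G5 2 b (b+1) (2*b) v + j"
proof (induction j)
  case 0 then show ?case by simp
next
  case (Suc j)
  have st: "G5 2 b (b+1) (2*b) (v + k*j + k) \<le> G5 2 b (b+1) (2*b) (v + k*j) + 1"
    by (rule G5step[OF assms])
  have e: "v + k * Suc j = v + k*j + k" by simp
  show ?case unfolding e using Suc.IH st by linarith
qed

lemma canonC: assumes "4 \<le> b" shows "canonical [1,2,b,b+1,2*b]"
  unfolding canon5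
proof (intro allI impI)
  fix w n assume "R5 2 b (b+1) (2*b) w n"
  then obtain x1 x2 x3 x4 x5 where x: "x1 + 2*x2 + b*x3 + (b+1)*x4 + (2*b)*x5 = w" "x1+x2+x3+x4+x5 \<le> n"
    unfolding R5_def by blast
  let ?G = "G5 2 b (b+1) (2*b)"
  have "?G 0 = 0" unfolding G5_def G4_def by simp
  have s1: "?G (0 + 1*x1) \<le> ?G 0 + x1" by (rule G5_mul[OF assms]) simp
  have s2: "?G (x1 + 2*x2) \<le> ?G x1 + x2" by (rule G5_mul[OF assms]) simp
  have s3: "?G (x1 + 2*x2 + b*x3) \<le> ?G (x1 + 2*x2) + x3" by (rule G5_mul[OF assms]) simp
  have s4: "?G (x1 + 2*x2 + b*x3 + (b+1)*x4) \<le> ?G (x1 + 2*x2 + b*x3) + x4" by (rule G5_mul[OF assms]) simp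
  have s5: "?G (x1 + 2*x2 + b*x3 + (b+1)*x4 + (2*b)*x5) \<le> ?G (x1 + 2*x2 + b*x3 + (b+1)*x4) + x5" by (rule G5_mul[OF assms]) simp
  show "?G w \<le> n" using s1 s2 s3 s4 s5 x \<open>?G 0 = 0\<close> by simp
qed

lemma noncanonD: assumes "4 \<le> b" shows "\<not> canonical [1,2,b,b+1]"
  unfolding canon4
proof
  assume h: "\<forall>w n. R4 2 b (b+1) w n \<longrightarrow> G4 2 b (b+1) w \<le> n"
  have "R4 2 b (b+1) (2*b) 2" unfolding R4_def
    by (rule exI[of _ 0], rule exI[of _ 0], rule exI[of _ 2], rule exI[of _ 0]) simp
  then have le: "G4 2 b (b+1) (2*b) \<le> 2" using h by blast
  have q: "(2*b) div (b+1) = 1 \<and> (2*b) mod (b+1) = b - 1" using div1[of "b+1" "2*b"] assms by simp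
  have q2: "(b-1) div b = 0 \<and> (b-1) mod b = b - 1" using assms by simp
  have g: "G4 2 b (b+1) (2*b) = 1 + f (b-1)" unfolding G4_def f_def using q q2 by simp
  have "b - 1 = (b-3) + 2" using assms by simp
  then have "f (b-1) = f (b-3) + 1" using F3[of "b-3"] by simp
  moreover have "1 \<le> f (b-3)" using Fp[of "b-3"] assms by simp
  ultimately show False using le g by simp
qed

theorem corollary3:
  fixes c2 c3 c4 :: nat
  assumes "is_system [1, c2, c3, c4, 2 * c4 - c2]"
  shows "(canonical [1, c2, c3, c4, 2 * c4 - c2] \<and> \<not> canonical [1, c2, c3, c4])
         \<longleftrightarrow> (c2 = 2 \<and> c4 = c3 + 1 \<and> 2 * c4 - c2 = 2 * c3 \<and> c3 > 3)"
proof -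
  have s: "1 < c2" "c2 < c3" "c3 < c4" using assms unfolding is_system_def by auto
  show ?thesis
  proof
    assume h: "canonical [1, c2, c3, c4, 2 * c4 - c2] \<and> \<not> canonical [1, c2, c3, c4]"
    have r: "c2 = 2 \<and> c4 = c3 + 1 \<and> c3 > 3"
      using fwd[OF s] h unfolding canon5 canon4 by (meson not_le)
    then show "c2 = 2 \<and> c4 = c3 + 1 \<and> 2 * c4 - c2 = 2 * c3 \<and> c3 > 3" by simp
  next
    assume h: "c2 = 2 \<and> c4 = c3 + 1 \<and> 2 * c4 - c2 = 2 * c3 \<and> c3 > 3"
    then have b4: "4 \<le> c3" by simp
    show "canonical [1, c2, c3, c4, 2 * c4 - c2] \<and> \<not> canonical [1, c2, c3, c4]"
      using canonC[OF b4] noncanonD[OF b4] h by simp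
  qed
qed

end
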